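(* For $n \geq 1$ let $P_n(x) = (x^2-x-1)x^n + 1$ and let $C_n$ be the convex hull of the set of roots $q'$ of $P_n$ with $|q'|<1$. Then for every $\varepsilon > 0$ there exists $N$ such that for all $n > N$, \[ \{z \in \mathbb{C} : |z| \leq 1-\varepsilon\} \subset C_n \subset \{z \in \mathbb{C}: |z| \leq 1\}. \] *)

theory Defs
  imports "HOL-Analysis.Analysis"
begin

definition P :: "nat \<Rightarrow> complex \<Rightarrow> complex" where
  "P n x = (x\<^sup>2 - x - 1) * x ^ n + 1"

definition C :: "nat \<Rightarrow> complex set" where
  "C n = convex hull {q. P n q = 0 \<and> norm q < 1}"

end

theory Submission
  imports Defs "HOL-Complex_Analysis.Weierstrass_Factorization"
begin


lemma qnorm_sq:
  fixes u :: complex assumes "norm u = 1"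
  shows "(norm (u^2 - u - 1))^2 = 1 + 4 * (Im u)^2"
proof -
  have h: "(Re u)^2 + (Im u)^2 = 1" using assms by (metis cmod_power2 one_power2)
  have r: "Re (u^2 - u - 1) = Re u ^2 - Im u^2 - Re u - 1" by (simp add: power2_eq_square)
  have i: "Im (u^2 - u - 1) = 2 * Re u * Im u - Im u" by (simp add: power2_eq_square)
  have "(norm (u^2 - u - 1))^2 = (Re u ^2 - Im u^2 - Re u - 1)^2 + (2 * Re u * Im u - Im u)^2"
    by (simp only: cmod_power2 r i)
  also have "\<dots> = 1 + 4 * (Im u)^2"
    using h by algebra
  finally show ?thesis .
qed

lemma qnorm_ge:
  fixes u :: complex and s :: real
  assumes "norm u = 1" "\<bar>Im u\<bar> \<ge> s" "0 \<le> s" "s \<le> 1"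
  shows "norm (u^2 - u - 1) \<ge> 1 + s^2"
proof -
  have s2: "s^2 \<le> 1" using assms by (simp add: power_le_one)
  have a: "s^2 * s^2 \<le> 1 * s^2" by (rule mult_right_mono[OF s2]) simp
  have b: "(1 + s^2)^2 = 1 + 2 * s^2 + s^2 * s^2" by (simp add: power2_eq_square algebra_simps)
  have "(1 + s^2)^2 \<le> 1 + 4 * s^2" using a b zero_le_power2[of s] by linarith
  also have "\<dots> \<le> 1 + 4 * (Im u)^2"
    using assms power_mono[of s "\<bar>Im u\<bar>" 2] by simp
  also have "\<dots> = (norm (u^2 - u - 1))^2" using qnorm_sq[OF assms(1)] by simp
  finally show ?thesis by (simp add: power2_le_iff_abs_le)
qed

lemma core:
  fixes u :: complex and s e :: real and n :: nat
  assumes u1: "norm u = 1" and us: "\<bar>Im u\<bar> \<ge> s" and s0: "0 < s" and s1: "s \<le> 1"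
   and e0: "0 < e" and es: "e \<le> s^2/10" and nb: "real n > 21/e"
  shows "\<exists>x. (x^2 - x - 1) * x^n + 1 = 0 \<and> norm x < 1 \<and> norm (x - u) \<le> e"
proof -
  define q where "q x = x^2 - x - 1" for x :: complex
  have qu: "norm (q u) \<ge> 1 + s^2" unfolding q_def using qnorm_ge[OF u1 us] s0 s1 by simp
  have qu3: "norm (q u) \<le> 3" unfolding q_def
    using norm_triangle_ineq4[of "u^2" u] norm_triangle_ineq4[of "u^2 - u" 1] u1
    by (simp add: norm_power)
  have s2: "s^2 \<le> 1" using s0 s1 by (simp add: power_le_one)
  have e1: "e \<le> 1/10" using es s2 by simp
  have "21/e \<ge> 210" using e0 e1 by (simp add: field_simps)
  with nb have n210: "real n > 210" by simp
  have diff: "norm (q x - q u) \<le> 4*e" if "x \<in> cball u e" for x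
  proof -
    have d: "norm (x - u) \<le> e" using that by (simp add: dist_norm norm_minus_commute)
    have nx: "norm x \<le> 1 + e" using norm_triangle_ineq2[of x u] d u1 by simp
    have "q x - q u = (x - u) * (x + u - 1)" unfolding q_def by (simp add: power2_eq_square algebra_simps)
    hence "norm (q x - q u) = norm (x - u) * norm (x + u - 1)" by (simp add: norm_mult)
    also have "norm (x + u - 1) \<le> 3 + e"
      using norm_triangle_ineq4[of "x+u" 1] norm_triangle_ineq[of x u] nx u1 by simp
    hence "norm (x - u) * norm (x + u - 1) \<le> e * (3 + e)"
      using d e0 by (intro mult_mono) auto
    also have "\<dots> \<le> 4 * e" using e0 e1 by (simp add: algebra_simps)
    finally show ?thesis .
  qed
  have qx: "norm (q x) \<ge> 1 + s^2/2" if "x \<in> cball u e" for x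
    using diff[OF that] qu norm_triangle_ineq2[of "q u" "q x"] es norm_minus_commute[of "q x" "q u"] zero_le_power2[of s] by linarith
  have qx0: "q x \<noteq> 0" if "x \<in> cball u e" for x proof - have "norm (q x) > 0" using qx[OF that] zero_le_power2[of s] by linarith thus ?thesis by auto qed
  define w where "w x = q u / q x" for x
  have w1: "norm (w x - 1) \<le> 4*e" if "x \<in> cball u e" for x
  proof -
    have "w x - 1 = (q u - q x) / q x" unfolding w_def using qx0[OF that] by (simp add: field_simps)
    hence "norm (w x - 1) = norm (q x - q u) / norm (q x)" by (simp add: norm_divide norm_minus_commute)
    also have "\<dots> \<le> norm (q x - q u) / 1"
    proof -
      have "1 \<le> norm (q x)" using qx[OF that] zero_le_power2[of s] by linarith
      thus ?thesis by (intro divide_left_mono) auto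
    qed
    finally show ?thesis using diff[OF that] by simp
  qed
  have e4: "4*e < 1/2" using e1 by simp
  define c where "c = -1/q u"
  define L1 where "L1 = Ln (c / u^n)"
  have u0: "u \<noteq> 0" using u1 by auto
  have qu0: "q u \<noteq> 0" proof - have "norm (q u) > 0" using qu zero_le_power2[of s] by linarith thus ?thesis by auto qed
  have cn0: "c / u^n \<noteq> 0" unfolding c_def using u0 qu0 by simp
  have ncu: "norm (c / u^n) = 1 / norm (q u)" unfolding c_def using u1 by (simp add: norm_divide norm_power norm_mult)
  have "ln (norm (q u)) \<le> norm (q u) - 1" using qu s0 by (intro ln_le_minus_one) (smt (verit) zero_le_power2)
  moreover have "ln (norm (q u)) \<ge> 0" using qu by (smt (verit) ln_ge_zero zero_le_power2)
  ultimately have lnb: "\<bar>ln (norm (c / u^n))\<bar> \<le> 2" using qu3 qu0 ncu by (simp add: ln_div)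
  have L1b: "norm L1 \<le> 6"
  proof -
    have "norm L1 \<le> \<bar>Re L1\<bar> + \<bar>Im L1\<bar>" by (rule cmod_le)
    also have "\<bar>Re L1\<bar> \<le> 2" unfolding L1_def using cn0 lnb by simp
    moreover have "\<bar>Im L1\<bar> \<le> pi" unfolding L1_def using mpi_less_Im_Ln[OF cn0] Im_Ln_le_pi[OF cn0] by linarith
    ultimately show ?thesis using pi_less_4 by linarith
  qed
  have L2b: "norm (Ln (w x)) \<le> 1" if "x \<in> cball u e" for x
  proof -
    have "norm (Ln (1 + (w x - 1))) \<le> 2 * norm (w x - 1)"
      using w1[OF that] e4 by (intro norm_Ln_le) simp
    thus ?thesis using w1[OF that] e4 by simp
  qed
  define T where "T x = u * exp ((L1 + Ln (w x)) / of_nat n)" for x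
  have Tmap: "T x \<in> cball u e" if "x \<in> cball u e" for x
  proof -
    define z where "z = (L1 + Ln (w x)) / of_nat n"
    have npos: "real n > 0" using n210 by simp
    have "norm z = norm (L1 + Ln (w x)) / real n" unfolding z_def by (simp add: norm_divide)
    also have "\<dots> \<le> 7 / real n"
      using norm_triangle_ineq[of L1 "Ln (w x)"] L1b L2b[OF that] npos by (intro divide_right_mono) auto
    finally have nz: "norm z \<le> 7 / real n" .
    have "7 / real n \<le> 1/2" using n210 by (simp add: field_simps)
    hence "norm (exp z - 1) \<le> 3/2 * norm z" using nz by (intro norm_exp_bounds) simp
    also have "\<dots> \<le> 3/2 * (7 / real n)" using nz by simp
    also have "\<dots> \<le> e" using nb e0 npos by (simp add: field_simps)
    finally have "norm (exp z - 1) \<le> e" .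
    moreover have "T x - u = u * (exp z - 1)" unfolding T_def z_def by (simp add: algebra_simps)
    ultimately have "norm (T x - u) \<le> e" using u1 by (simp add: norm_mult)
    thus ?thesis by (simp add: dist_norm norm_minus_commute)
  qed
  have Tcont: "continuous_on (cball u e) T"
  proof -
    have wc: "continuous_on (cball u e) w" unfolding w_def q_def
      using qx0 unfolding q_def by (intro continuous_intros) auto
    have wnp: "w x \<notin> \<real>\<^sub>\<le>\<^sub>0" if "x \<in> cball u e" for x
    proof -
      have "Re (w x - 1) \<ge> - norm (w x - 1)" using abs_Re_le_cmod[of "w x - 1"] by linarith
      hence "Re (w x) > 0" using w1[OF that] e4 by simp
      thus ?thesis by (simp add: complex_nonpos_Reals_iff)
    qed
    show ?thesis unfolding T_def
      by (intro continuous_intros wc continuous_on_compose2[OF continuous_on_Ln wc, of "w ` cball u e"]) (use wnp n210 in auto)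
  qed
  obtain x where xb: "x \<in> cball u e" and Tx: "T x = x"
    using brouwer_ball[OF e0 Tcont] Tmap by blast
  have n0: "n \<noteq> 0" using n210 by auto
  have "x^n = u^n * exp (of_nat n * ((L1 + Ln (w x)) / of_nat n))"
    using Tx unfolding T_def by (metis exp_of_nat_mult power_mult_distrib)
  also have "\<dots> = u^n * (exp L1 * exp (Ln (w x)))" using n0 by (simp add: exp_add)
  also have "\<dots> = u^n * ((c / u^n) * w x)"
    using cn0 qu0 qx0[OF xb] unfolding L1_def w_def by simp
  also have "\<dots> = - 1 / q x" unfolding c_def w_def using u0 qu0 by (simp add: field_simps)
  finally have xn: "x^n = - 1 / q x" .
  hence root: "(x^2 - x - 1) * x^n + 1 = 0" using qx0[OF xb] unfolding q_def by (simp add: field_simps)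
  have "norm x ^ n = norm (x^n)" by (simp add: norm_power)
  also have "\<dots> = 1 / norm (q x)" using xn by (simp add: norm_divide)
  also have "\<dots> < 1"
  proof -
    have "s^2 > 0" using s0 by simp
    hence "norm (q x) > 1" using qx[OF xb] by linarith
    thus ?thesis by (simp add: divide_less_eq)
  qed
  finally have "norm x ^ n < 1" .
  hence nx: "norm x < 1" by (rule contrapos_pp) (use one_le_power[of "norm x" n] in linarith)
  show ?thesis using root nx xb by (auto simp: dist_norm norm_minus_commute)
qed


lemma direction:
  fixes v :: complex and s :: real
  assumes v1: "norm v = 1" and s0: "0 < s" and s1: "s \<le> 1/2"
  shows "\<exists>u. norm u = 1 \<and> \<bar>Im u\<bar> \<ge> s \<and> inner v u \<ge> 1 - s^2"
proof (cases "\<bar>Im v\<bar> \<ge> s")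
  case True
  have "inner v v = 1" using v1 by (simp add: power2_norm_eq_inner[symmetric])
  thus ?thesis using True v1 by (intro exI[of _ v]) (simp add: s0)
next
  case False
  define a where "a = (if Re v \<ge> 0 then 1 else -1 :: real)"
  define b where "b = (if Im v \<ge> 0 then 1 else -1 :: real)"
  define u where "u = Complex (a * sqrt (1 - s^2)) (b * s)"
  have s2: "s^2 \<le> 1" using s0 s1 by (simp add: power_le_one)
  have a2: "a^2 = 1" "b^2 = 1" unfolding a_def b_def by auto
  have "(norm u)^2 = a^2 * (sqrt (1 - s^2))^2 + b^2 * s^2" unfolding u_def
    by (simp add: cmod_power2 power_mult_distrib)
  also have "\<dots> = 1" using a2 s2 by simp
  finally have nu2: "(norm u)^2 = 1" .
  have nu: "norm u = 1" using nu2 norm_ge_zero[of u] by (smt (verit) power2_eq_1_iff)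
  have imu: "\<bar>Im u\<bar> \<ge> s" unfolding u_def b_def using s0 by simp
  have h: "(Re v)^2 + (Im v)^2 = 1" using v1 by (metis cmod_power2 one_power2)
  have "(Im v)^2 \<le> s^2" using False s0 by (simp add: power2_le_iff_abs_le abs_le_square_iff)
  hence "1 - s^2 \<le> (Re v)^2" using h by linarith
  hence ra: "sqrt (1 - s^2) \<le> \<bar>Re v\<bar>" using real_sqrt_le_mono by fastforce
  have "inner v u = \<bar>Re v\<bar> * sqrt (1 - s^2) + \<bar>Im v\<bar> * s"
    unfolding u_def a_def b_def inner_complex_def by auto
  also have "\<dots> \<ge> sqrt (1 - s^2) * sqrt (1 - s^2)"
    using ra s0 by (smt (verit) abs_ge_zero mult_right_mono real_sqrt_ge_zero s2 zero_le_mult_iff)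
  moreover have "sqrt (1 - s^2) * sqrt (1 - s^2) = 1 - s^2" using s2 by simp
  ultimately show ?thesis using nu imu by auto
qed

lemma roots_finite: "finite {q. P n q = 0 \<and> norm q < 1}" if "n > 0"
proof -
  define p where "p = [:-1,-1,1:] * monom (1::complex) n + 1"
  have pe: "poly p x = P n x" for x
    unfolding p_def P_def by (simp add: poly_monom power2_eq_square algebra_simps)
  have "poly p 0 = 1" using that by (simp add: pe P_def)
  hence "p \<noteq> 0" by auto
  hence "finite {x. poly p x = 0}" by (rule poly_roots_finite)
  thus ?thesis by (rule finite_subset[rotated]) (auto simp: pe)
qed

theorem theorem4p3:
  fixes \<epsilon> :: real
  assumes "\<epsilon> > 0"
  shows "\<exists>N::nat. \<forall>n>N. cball 0 (1 - \<epsilon>) \<subseteq> C n \<and> C n \<subseteq> cball 0 1"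
proof -
  define s where "s = min (1/2) (\<epsilon>/2)"
  define e where "e = s^2/10"
  have s0: "0 < s" and s1: "s \<le> 1/2" and se: "s \<le> \<epsilon>/2" using assms unfolding s_def by auto
  have e0: "0 < e" unfolding e_def using s0 by simp
  have ss: "s^2 \<le> s/2" using s0 s1 by (simp add: power2_eq_square mult_left_le)
  define N where "N = nat \<lceil>21/e\<rceil>"
  have "\<forall>n>N. cball 0 (1 - \<epsilon>) \<subseteq> C n \<and> C n \<subseteq> cball 0 1"
  proof (intro allI impI)
    fix n assume nN: "n > N"
    define T where "T = {q. P n q = 0 \<and> norm q < 1}"
    have CT: "C n = convex hull T" unfolding C_def T_def ..
    have nb: "real n > 21/e" using nN unfolding N_def by linarith
    have npos: "n > 0" using nN by simp
    have near: "\<exists>x\<in>T. norm (x - u) \<le> e" if "norm u = 1" "\<bar>Im u\<bar> \<ge> s" for u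
      using core[OF that s0 _ e0 _ nb] s1 unfolding T_def e_def P_def by auto
    have fin: "finite T" unfolding T_def using roots_finite npos by blast
    have up: "C n \<subseteq> cball 0 1" unfolding CT
      by (rule hull_minimal) (auto simp: T_def convex_cball)
    have low: "cball 0 (1 - \<epsilon>) \<subseteq> C n"
    proof
      fix z :: complex assume zb: "z \<in> cball 0 (1 - \<epsilon>)"
      hence nz: "norm z \<le> 1 - \<epsilon>" by simp
      show "z \<in> C n"
      proof (rule ccontr)
        assume "z \<notin> C n"
        moreover have "convex (C n)" unfolding CT by simp
        moreover have "closed (C n)" unfolding CT using fin
          by (intro compact_imp_closed finite_imp_compact_convex_hull)
        ultimately obtain a b where ab: "inner a z < b" "\<forall>x\<in>C n. inner a x > b"
          using separating_hyperplane_closed_point by blast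
        have TC: "T \<subseteq> C n" unfolding CT by (rule hull_subset)
        show False
        proof (cases "a = 0")
          case True
          obtain x where "x \<in> T" using near[of \<i>] s1 by auto
          thus False using ab True TC by auto
        next
          case False
          define v where "v = (- 1 / norm a) *\<^sub>R a"
          have v1: "norm v = 1" unfolding v_def using False by simp
          have av: "a = (- norm a) *\<^sub>R v" unfolding v_def using False by simp
          obtain u where u: "norm u = 1" "\<bar>Im u\<bar> \<ge> s" "inner v u \<ge> 1 - s^2"
            using direction[OF v1 s0 s1] by blast
          obtain x where x: "x \<in> T" "norm (x - u) \<le> e" using near[OF u(1,2)] by blast
          have "\<bar>inner v (x - u)\<bar> \<le> norm v * norm (x - u)" by (rule Cauchy_Schwarz_ineq2)
          hence "inner v (x - u) \<ge> - e" using v1 x(2) by simp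
          hence ivx: "inner v x \<ge> 1 - \<epsilon>"
          proof -
            have "inner v x = inner v u + inner v (x - u)" by (simp add: inner_diff_right)
            thus ?thesis using \<open>inner v (x - u) \<ge> - e\<close> u(3) ss se zero_le_power2[of s] unfolding e_def by linarith
          qed
          have "\<bar>inner v z\<bar> \<le> norm v * norm z" by (rule Cauchy_Schwarz_ineq2)
          hence ivz: "inner v z \<le> 1 - \<epsilon>" using v1 nz by simp
          have na: "norm a > 0" using False by simp
          have "inner a x = - norm a * inner v x" by (subst av) simp
          also have "\<dots> \<le> - norm a * inner v z" using ivx ivz na by simp
          also have "\<dots> = inner a z" by (subst (2) av) simp
          finally have "inner a x \<le> inner a z" .
          moreover have "inner a x > b" using ab(2) TC x(1) by auto
          ultimately show False using ab(1) by simp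
        qed
      qed
    qed
    show "cball 0 (1 - \<epsilon>) \<subseteq> C n \<and> C n \<subseteq> cball 0 1" using low up by simp
  qed
  thus ?thesis by blast
qed

end
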